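(* Let $M$ be a left $H$-module with action $\triangleright$, and let $T\in\mathrm{End}_k(M)$ be a linear projection ($T^2=T$) such that $T_h\circ T=T\circ T_h$ for all $h\in H$, where $T_h(m)=h_{(1)}\triangleright T(S(h_{(2)})\triangleright m)$. Then the linear map $\pi:H\to\mathrm{End}_k(T(M))$, $\pi(h)(m)=T(h\triangleright m)$ for $m\in T(M)$, is a partial representation of $H$. Thus $(T(M),\pi)$ is a partial $H$-module.
   Context: Throughout, $k$ is a field and $H$ is a Hopf algebra over $k$ with bijective antipode $S$ and Sweedler notation $\Delta(h)=h_{(1)}\otimes h_{(2)}$. A partial representation of $H$ on a vector space $V$ is a linear map $\pi:H\to\mathrm{End}_k(V)$ satisfying, for all $h,k\in H$: - $\pi(1_H)=\mathrm{id}_V$; - $\pi(h)\pi(k_{(1)})\pi(S(k_{(2)}))=\pi(hk_{(1)})\pi(S(k_{(2)}))$; - $\pi(h_{(1)})\pi(S(h_{(2)}))\pi(k)=\pi(h_{(1)})\pi(S(h_{(2)})k)$; - $\pi(h)\pi(S(k_{(1)}))\pi(k_{(2)})=\pi(hS(k_{(1)}))\pi(k_{(2)})$; - $\pi(S(h_{(1)}))\pi(h_{(2)})\pi(k)=\pi(S(h_{(1)}))\pi(h_{(2)}k)$. *)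

theory Defs
  imports Main "HOL.Vector_Spaces"
begin

(* Elements of H \<otimes> H (resp. H \<otimes> H \<otimes> H) are represented by finite lists of
   simple tensors. Over a field, two such finite sums are equal in the tensor
   product iff they agree under all products of linear functionals. *)

definition tensor2_eq ::
  "('k::field \<Rightarrow> 'h::ab_group_add \<Rightarrow> 'h) \<Rightarrow> ('h \<times> 'h) list \<Rightarrow> ('h \<times> 'h) list \<Rightarrow> bool" where
  "tensor2_eq sc xs ys \<longleftrightarrow>
     (\<forall>f g. Vector_Spaces.linear sc (*) f \<longrightarrow> Vector_Spaces.linear sc (*) g \<longrightarrow>
        (\<Sum>(a,b)\<leftarrow>xs. f a * g b) = (\<Sum>(a,b)\<leftarrow>ys. f a * g b))"

definition tensor3_eq ::
  "('k::field \<Rightarrow> 'h::ab_group_add \<Rightarrow> 'h) \<Rightarrow> ('h \<times> 'h \<times> 'h) list \<Rightarrow> ('h \<times> 'h \<times> 'h) list \<Rightarrow> bool" where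
  "tensor3_eq sc xs ys \<longleftrightarrow>
     (\<forall>f g l. Vector_Spaces.linear sc (*) f \<longrightarrow> Vector_Spaces.linear sc (*) g \<longrightarrow> Vector_Spaces.linear sc (*) l \<longrightarrow>
        (\<Sum>(a,b,c)\<leftarrow>xs. f a * g b * l c) = (\<Sum>(a,b,c)\<leftarrow>ys. f a * g b * l c))"

(* Hopf algebra over the field 'k with bijective antipode.
   sc: scalar multiplication; Delta h: a Sweedler representation
   [(h_(1),h_(2)),...] of the comultiplication; eps: counit; S: antipode. *)
locale hopf_algebra =
  vector_space sc
  for sc :: "'k::field \<Rightarrow> 'h::ring_1 \<Rightarrow> 'h"
  and Delta :: "'h \<Rightarrow> ('h \<times> 'h) list"
  and eps :: "'h \<Rightarrow> 'k"
  and S :: "'h \<Rightarrow> 'h" +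
  assumes sc_mult_left: "sc c (x * y) = sc c x * y"
    and sc_mult_right: "sc c (x * y) = x * sc c y"
    and Delta_add: "tensor2_eq sc (Delta (x + y)) (Delta x @ Delta y)"
    and Delta_scale: "tensor2_eq sc (Delta (sc c x)) (map (\<lambda>(a,b). (sc c a, b)) (Delta x))"
    and coassoc: "tensor3_eq sc
        (concat (map (\<lambda>(a,b). map (\<lambda>(a1,a2). (a1,a2,b)) (Delta a)) (Delta h)))
        (concat (map (\<lambda>(a,b). map (\<lambda>(b1,b2). (a,b1,b2)) (Delta b)) (Delta h)))"
    and Delta_mult: "tensor2_eq sc (Delta (x * y))
        (concat (map (\<lambda>(a,b). map (\<lambda>(c,d). (a * c, b * d)) (Delta y)) (Delta x)))"
    and Delta_one: "tensor2_eq sc (Delta 1) [(1,1)]"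
    and eps_linear: "Vector_Spaces.linear sc (*) eps"
    and eps_mult: "eps (x * y) = eps x * eps y"
    and eps_one: "eps 1 = 1"
    and counit_left: "(\<Sum>(a,b)\<leftarrow>Delta h. sc (eps a) b) = h"
    and counit_right: "(\<Sum>(a,b)\<leftarrow>Delta h. sc (eps b) a) = h"
    and S_linear: "Vector_Spaces.linear sc sc S"
    and antipode_left: "(\<Sum>(a,b)\<leftarrow>Delta h. S a * b) = sc (eps h) 1"
    and antipode_right: "(\<Sum>(a,b)\<leftarrow>Delta h. a * S b) = sc (eps h) 1"
    and S_bij: "bij S"

locale hopf_module = hopf_algebra sc Delta eps S
  for sc :: "'k::field \<Rightarrow> 'h::ring_1 \<Rightarrow> 'h"
  and Delta :: "'h \<Rightarrow> ('h \<times> 'h) list"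
  and eps :: "'h \<Rightarrow> 'k"
  and S :: "'h \<Rightarrow> 'h" +
  fixes scM :: "'k \<Rightarrow> 'm::ab_group_add \<Rightarrow> 'm"
  and act :: "'h \<Rightarrow> 'm \<Rightarrow> 'm"
  assumes M_vs: "vector_space scM"
    and act_linear_right: "Vector_Spaces.linear scM scM (act h)"
    and act_linear_left: "Vector_Spaces.linear sc scM (\<lambda>h. act h m)"
    and act_one: "act 1 m = m"
    and act_mult: "act (x * y) m = act x (act y m)"

(* Partial representation of H on the subspace V of the k-vector space 'm:
   pi h is (the restriction to V of) an element of End_k(V). *)
definition partial_rep ::
  "('k::field \<Rightarrow> 'h::ring_1 \<Rightarrow> 'h) \<Rightarrow> ('h \<Rightarrow> ('h \<times> 'h) list) \<Rightarrow> ('h \<Rightarrow> 'h)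
   \<Rightarrow> ('k \<Rightarrow> 'm::ab_group_add \<Rightarrow> 'm) \<Rightarrow> 'm set \<Rightarrow> ('h \<Rightarrow> 'm \<Rightarrow> 'm) \<Rightarrow> bool" where
  "partial_rep sc Delta S scM V pi \<longleftrightarrow>
     module.subspace scM V
   \<and> (\<forall>h. \<forall>v\<in>V. pi h v \<in> V)
   \<and> (\<forall>h. \<forall>v\<in>V. \<forall>w\<in>V. pi h (v + w) = pi h v + pi h w)
   \<and> (\<forall>h c. \<forall>v\<in>V. pi h (scM c v) = scM c (pi h v))
   \<and> (\<forall>x y. \<forall>v\<in>V. pi (x + y) v = pi x v + pi y v)
   \<and> (\<forall>x c. \<forall>v\<in>V. pi (sc c x) v = scM c (pi x v))
   \<and> (\<forall>v\<in>V. pi 1 v = v)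
   \<and> (\<forall>h k. \<forall>v\<in>V. (\<Sum>(a,b)\<leftarrow>Delta k. pi h (pi a (pi (S b) v)))
                  = (\<Sum>(a,b)\<leftarrow>Delta k. pi (h * a) (pi (S b) v)))
   \<and> (\<forall>h k. \<forall>v\<in>V. (\<Sum>(a,b)\<leftarrow>Delta h. pi a (pi (S b) (pi k v)))
                  = (\<Sum>(a,b)\<leftarrow>Delta h. pi a (pi (S b * k) v)))
   \<and> (\<forall>h k. \<forall>v\<in>V. (\<Sum>(a,b)\<leftarrow>Delta k. pi h (pi (S a) (pi b v)))
                  = (\<Sum>(a,b)\<leftarrow>Delta k. pi (h * S a) (pi b v)))
   \<and> (\<forall>h k. \<forall>v\<in>V. (\<Sum>(a,b)\<leftarrow>Delta h. pi (S a) (pi b (pi k v)))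
                  = (\<Sum>(a,b)\<leftarrow>Delta h. pi (S a) (pi (b * k) v)))"

definition T_twist ::
  "('h \<Rightarrow> ('h \<times> 'h) list) \<Rightarrow> ('h \<Rightarrow> 'h) \<Rightarrow> ('h \<Rightarrow> 'm \<Rightarrow> 'm::ab_group_add)
   \<Rightarrow> ('m \<Rightarrow> 'm) \<Rightarrow> 'h \<Rightarrow> 'm \<Rightarrow> 'm" where
  "T_twist Delta S act T h m = (\<Sum>(a,b)\<leftarrow>Delta h. act a (T (act (S b) m)))"

end

theory Submission
  imports Defs
begin

lemma lin_sum_list:
  assumes "Vector_Spaces.linear s1 s2 f"
  shows "f (sum_list (map g xs)) = sum_list (map (\<lambda>x. f (g x)) xs)"
proof -
  interpret module_hom s1 s2 f using assms by (simp add: module_hom_iff_linear)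
  show ?thesis by (induction xs) (simp_all add: add zero)
qed

lemma lin_add: "Vector_Spaces.linear s1 s2 f \<Longrightarrow> f (x + y) = f x + f y"
  by (simp add: linear_iff)
lemma lin_scale: "Vector_Spaces.linear s1 s2 f \<Longrightarrow> f (s1 c x) = s2 c (f x)"
  by (simp add: linear_iff)
lemma lin_zero: "Vector_Spaces.linear s1 s2 f \<Longrightarrow> f 0 = 0"
  by (metis module_hom.zero module_hom_iff_linear)
lemma lin_sum: "Vector_Spaces.linear s1 s2 f \<Longrightarrow> f (sum g A) = (\<Sum>x\<in>A. f (g x))"
  by (metis module_hom.sum module_hom_iff_linear)

lemma vs_field: "vector_space ((*) :: 'k::field \<Rightarrow> 'k \<Rightarrow> 'k)"
  by (unfold_locales) (simp_all add: algebra_simps)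

lemma expand:
  fixes s :: "'k::field \<Rightarrow> 'h::ab_group_add \<Rightarrow> 'h"
  assumes vs: "vector_space s" and fin: "finite A"
  shows "\<exists>E f. finite E \<and> (\<forall>e\<in>E. Vector_Spaces.linear s (*) (f e)) \<and> (\<forall>a\<in>A. a = (\<Sum>e\<in>E. s (f e a) e))"
proof -
  interpret vector_space s by (rule vs)
  interpret p: vector_space_pair s "(*) :: 'k \<Rightarrow> 'k \<Rightarrow> 'k"
    by (simp add: vector_space_pair_def vs vs_field)
  obtain B where B: "B \<subseteq> A" "independent B" "A \<subseteq> span B"
    using maximal_independent_subset by blast
  have finB: "finite B" using B fin finite_subset by blast
  define f where "f e = p.construct B (\<lambda>x. if x = e then 1 else (0::'k))" for e
  have lf: "Vector_Spaces.linear s (*) (f e)" for e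
    unfolding f_def by (rule p.linear_construct[OF B(2)])
  have "a = (\<Sum>e\<in>B. s (f e a) e)" if a: "a \<in> A" for a
  proof -
    have "a \<in> range (\<lambda>u. \<Sum>v\<in>B. s (u v) v)" using a B span_finite[OF finB] by blast
    then obtain u where u: "a = (\<Sum>v\<in>B. s (u v) v)" by blast
    have fe: "f e a = u e" if e: "e \<in> B" for e
    proof -
      have "f e a = (\<Sum>v\<in>B. u v * f e v)"
        unfolding u by (simp add: lin_sum[OF lf] lin_scale[OF lf])
      also have "\<dots> = (\<Sum>v\<in>B. if v = e then u v else 0)"
        by (rule sum.cong) (simp_all add: f_def p.construct_basis[OF B(2)])
      also have "\<dots> = u e" using e finB by simp
      finally show ?thesis .
    qed
    show ?thesis unfolding u[symmetric] using fe u by simp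
  qed
  then show ?thesis using finB lf by blast
qed

lemma sum_list_expand:
  assumes vs: "vector_space scM" and fI: "finite I"
    and F: "\<forall>x\<in>set zs. F x = (\<Sum>i\<in>I. scM (c i x) (W i))"
  shows "sum_list (map F zs) = (\<Sum>i\<in>I. scM (sum_list (map (c i) zs)) (W i))"
  using F
proof (induction zs)
  case Nil
  interpret vector_space scM by (rule vs)
  show ?case by simp
next
  case (Cons x zs)
  interpret vector_space scM by (rule vs)
  show ?case using Cons by (simp add: sum.distrib[symmetric] scale_left_distrib)
qed

lemma transfer2:
  fixes sc :: "'k::field \<Rightarrow> 'h::ab_group_add \<Rightarrow> 'h" and scM :: "'k \<Rightarrow> 'm::ab_group_add \<Rightarrow> 'm"
    and \<Phi> :: "'h \<Rightarrow> 'h \<Rightarrow> 'm"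
  assumes vs: "vector_space sc" and vsM: "vector_space scM" and te: "tensor2_eq sc xs ys"
    and l1: "\<And>b. Vector_Spaces.linear sc scM (\<lambda>a. \<Phi> a b)"
    and l2: "\<And>a. Vector_Spaces.linear sc scM (\<Phi> a)"
  shows "(\<Sum>(a,b)\<leftarrow>xs. \<Phi> a b) = (\<Sum>(a,b)\<leftarrow>ys. \<Phi> a b)"
proof -
  interpret vector_space scM by (rule vsM)
  obtain E f where E: "finite E" "\<forall>e\<in>E. Vector_Spaces.linear sc (*) (f e)"
    "\<forall>a\<in>fst ` set (xs @ ys). a = (\<Sum>e\<in>E. sc (f e a) e)"
    using expand[OF vs, of "fst ` set (xs @ ys)"] by blast
  obtain E' g where E': "finite E'" "\<forall>e\<in>E'. Vector_Spaces.linear sc (*) (g e)"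
    "\<forall>a\<in>snd ` set (xs @ ys). a = (\<Sum>e\<in>E'. sc (g e a) e)"
    using expand[OF vs, of "snd ` set (xs @ ys)"] by blast
  define c where "c = (\<lambda>(e,e') (a,b). f e a * g e' b)"
  define W where "W = (\<lambda>(e,e'). \<Phi> e e')"
  have key: "\<forall>x\<in>set zs. (\<lambda>(a,b). \<Phi> a b) x = (\<Sum>i\<in>E \<times> E'. scM (c i x) (W i))"
    if zs: "set zs \<subseteq> set (xs @ ys)" for zs
  proof
    fix x assume x: "x \<in> set zs"
    obtain a b where ab: "x = (a,b)" by force
    have a: "a = (\<Sum>e\<in>E. sc (f e a) e)" using E(3) x zs ab by force
    have b: "b = (\<Sum>e\<in>E'. sc (g e b) e)" using E'(3) x zs ab by force
    have "\<Phi> a b = (\<Sum>e\<in>E. scM (f e a) (\<Phi> e b))"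
      by (subst a) (simp add: lin_sum[OF l1] lin_scale[OF l1])
    also have "\<dots> = (\<Sum>e\<in>E. \<Sum>e'\<in>E'. scM (f e a * g e' b) (\<Phi> e e'))"
      by (subst b) (simp add: lin_sum[OF l2] lin_scale[OF l2] scale_sum_right)
    also have "\<dots> = (\<Sum>i\<in>E \<times> E'. scM (c i x) (W i))"
      by (simp add: sum.cartesian_product c_def W_def ab split_def)
    finally show "(\<lambda>(a,b). \<Phi> a b) x = (\<Sum>i\<in>E \<times> E'. scM (c i x) (W i))" using ab by simp
  qed
  have coef: "sum_list (map (c i) xs) = sum_list (map (c i) ys)" if i: "i \<in> E \<times> E'" for i
  proof -
    obtain e e' where ee: "i = (e,e')" by force
    have "Vector_Spaces.linear sc (*) (f e)" "Vector_Spaces.linear sc (*) (g e')" using i ee E E' by auto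
    then show ?thesis using te unfolding tensor2_eq_def c_def ee by simp
  qed
  show ?thesis
  proof -
    have fI: "finite (E \<times> E')" using E(1) E'(1) by simp
    show ?thesis
      using sum_list_expand[OF vsM fI key[of xs]] sum_list_expand[OF vsM fI key[of ys]] coef
      by (simp cong: sum.cong)
  qed
qed

lemma transfer3:
  fixes sc :: "'k::field \<Rightarrow> 'h::ab_group_add \<Rightarrow> 'h" and scM :: "'k \<Rightarrow> 'm::ab_group_add \<Rightarrow> 'm"
    and \<Phi> :: "'h \<Rightarrow> 'h \<Rightarrow> 'h \<Rightarrow> 'm"
  assumes vs: "vector_space sc" and vsM: "vector_space scM" and te: "tensor3_eq sc xs ys"
    and l1: "\<And>b c. Vector_Spaces.linear sc scM (\<lambda>a. \<Phi> a b c)"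
    and l2: "\<And>a c. Vector_Spaces.linear sc scM (\<lambda>b. \<Phi> a b c)"
    and l3: "\<And>a b. Vector_Spaces.linear sc scM (\<Phi> a b)"
  shows "(\<Sum>(a,b,c)\<leftarrow>xs. \<Phi> a b c) = (\<Sum>(a,b,c)\<leftarrow>ys. \<Phi> a b c)"
proof -
  interpret vector_space scM by (rule vsM)
  obtain E f where E: "finite E" "\<forall>e\<in>E. Vector_Spaces.linear sc (*) (f e)"
    "\<forall>a\<in>fst ` set (xs @ ys). a = (\<Sum>e\<in>E. sc (f e a) e)"
    using expand[OF vs, of "fst ` set (xs @ ys)"] by blast
  obtain E' g where E': "finite E'" "\<forall>e\<in>E'. Vector_Spaces.linear sc (*) (g e)"
    "\<forall>a\<in>(fst \<circ> snd) ` set (xs @ ys). a = (\<Sum>e\<in>E'. sc (g e a) e)"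
    using expand[OF vs, of "(fst \<circ> snd) ` set (xs @ ys)"] by blast
  obtain E'' l where E'': "finite E''" "\<forall>e\<in>E''. Vector_Spaces.linear sc (*) (l e)"
    "\<forall>a\<in>(snd \<circ> snd) ` set (xs @ ys). a = (\<Sum>e\<in>E''. sc (l e a) e)"
    using expand[OF vs, of "(snd \<circ> snd) ` set (xs @ ys)"] by blast
  define c where "c = (\<lambda>(e,e',e'') (a,b,d). f e a * g e' b * l e'' d)"
  define W where "W = (\<lambda>(e,e',e''). \<Phi> e e' e'')"
  have key: "\<forall>x\<in>set zs. (\<lambda>(a,b,d). \<Phi> a b d) x = (\<Sum>i\<in>E \<times> E' \<times> E''. scM (c i x) (W i))"
    if zs: "set zs \<subseteq> set (xs @ ys)" for zs
  proof
    fix x assume x: "x \<in> set zs"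
    obtain a b d where ab: "x = (a,b,d)" by (cases x) force
    have a: "a = (\<Sum>e\<in>E. sc (f e a) e)" using E(3) x zs ab by force
    have b: "b = (\<Sum>e\<in>E'. sc (g e b) e)" using E'(3) x zs ab by force
    have d: "d = (\<Sum>e\<in>E''. sc (l e d) e)" using E''(3) x zs ab by force
    have "\<Phi> a b d = (\<Sum>e\<in>E. scM (f e a) (\<Phi> e b d))"
      by (subst a) (simp add: lin_sum[OF l1] lin_scale[OF l1])
    also have "\<dots> = (\<Sum>e\<in>E. \<Sum>e'\<in>E'. scM (f e a * g e' b) (\<Phi> e e' d))"
      by (subst b) (simp add: lin_sum[OF l2] lin_scale[OF l2] scale_sum_right)
    also have "\<dots> = (\<Sum>e\<in>E. \<Sum>e'\<in>E'. \<Sum>e''\<in>E''. scM (f e a * g e' b * l e'' d) (\<Phi> e e' e''))"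
      by (subst d) (simp add: lin_sum[OF l3] lin_scale[OF l3] scale_sum_right)
    also have "\<dots> = (\<Sum>i\<in>E \<times> E' \<times> E''. scM (c i x) (W i))"
      by (simp add: sum.cartesian_product c_def W_def ab split_def)
    finally show "(\<lambda>(a,b,d). \<Phi> a b d) x = (\<Sum>i\<in>E \<times> E' \<times> E''. scM (c i x) (W i))" using ab by simp
  qed
  have coef: "sum_list (map (c i) xs) = sum_list (map (c i) ys)" if i: "i \<in> E \<times> E' \<times> E''" for i
  proof -
    obtain e e' e'' where ee: "i = (e,e',e'')" by (cases i) force
    have "Vector_Spaces.linear sc (*) (f e)" "Vector_Spaces.linear sc (*) (g e')"
      "Vector_Spaces.linear sc (*) (l e'')" using i ee E E' E'' by auto
    then show ?thesis using te unfolding tensor3_eq_def c_def ee by simp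
  qed
  show ?thesis
  proof -
    have fI: "finite (E \<times> E' \<times> E'')" using E(1) E'(1) E''(1) by simp
    show ?thesis
      using sum_list_expand[OF vsM fI key[of xs]] sum_list_expand[OF vsM fI key[of ys]] coef
      by (simp cong: sum.cong)
  qed
qed

lemma sum_list_concat_map: "sum_list (concat xss) = sum_list (map sum_list xss)"
  by (induction xss) simp_all

lemma lin_sum_list2:
  assumes "Vector_Spaces.linear s1 s2 f"
  shows "f (\<Sum>(a,b)\<leftarrow>xs. g a b) = (\<Sum>(a,b)\<leftarrow>xs. f (g a b))"
  using lin_sum_list[OF assms, of "\<lambda>(a,b). g a b" xs] by (simp add: split_def)

lemma lin_comp: "Vector_Spaces.linear s1 s2 f \<Longrightarrow> Vector_Spaces.linear s2 s3 g \<Longrightarrow>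
   Vector_Spaces.linear s1 s3 (\<lambda>x. g (f x))"
  using Vector_Spaces.linear_compose[of s1 s2 f s3 g] by (simp add: o_def)

lemma lin_sum_list_fun:
  assumes vs1: "vector_space s1" and vs2: "vector_space s2"
    and F: "\<forall>x\<in>set xs. Vector_Spaces.linear s1 s2 (F x)"
  shows "Vector_Spaces.linear s1 s2 (\<lambda>m. \<Sum>x\<leftarrow>xs. F x m)"
  using F
proof (induction xs)
  case Nil
  interpret vector_space s2 by (rule vs2)
  show ?case using vs1 vs2 by (simp add: linear_iff)
next
  case (Cons x xs)
  interpret vector_space s2 by (rule vs2)
  have "Vector_Spaces.linear s1 s2 (F x)" using Cons by simp
  moreover have "Vector_Spaces.linear s1 s2 (\<lambda>m. \<Sum>x\<leftarrow>xs. F x m)" using Cons by simp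
  ultimately show ?case using vs1 vs2 by (simp add: linear_iff scale_right_distrib)
qed

lemma (in vector_space) scale_sum_list: "c *s sum_list (map f xs) = sum_list (map (\<lambda>x. c *s f x) xs)"
  by (induction xs) (simp_all add: scale_right_distrib)

locale proj = hopf_module sc Delta eps S scM act
  for sc :: "'k::field \<Rightarrow> 'h::ring_1 \<Rightarrow> 'h"
  and Delta :: "'h \<Rightarrow> ('h \<times> 'h) list"
  and eps :: "'h \<Rightarrow> 'k"
  and S :: "'h \<Rightarrow> 'h"
  and scM :: "'k \<Rightarrow> 'm::ab_group_add \<Rightarrow> 'm"
  and act :: "'h \<Rightarrow> 'm \<Rightarrow> 'm" +
  fixes T :: "'m \<Rightarrow> 'm"
  assumes linT: "Vector_Spaces.linear scM scM T"
    and idem: "\<And>m. T (T m) = T m"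
    and comm: "\<And>h m. T_twist Delta S act T h (T m) = T (T_twist Delta S act T h m)"
begin

abbreviation "Tw \<equiv> T_twist Delta S act T"

lemma vsH: "vector_space sc" by unfold_locales
lemma vsM: "vector_space scM" by (rule M_vs)

lemma coassoc_tr:
  assumes l1: "\<And>b c. Vector_Spaces.linear sc scM (\<lambda>a. \<Phi> a b c)"
    and l2: "\<And>a c. Vector_Spaces.linear sc scM (\<lambda>b. \<Phi> a b c)"
    and l3: "\<And>a b. Vector_Spaces.linear sc scM (\<Phi> a b)"
  shows "(\<Sum>(a,b)\<leftarrow>Delta h. \<Sum>(c,d)\<leftarrow>Delta a. \<Phi> c d b) = (\<Sum>(a,b)\<leftarrow>Delta h. \<Sum>(c,d)\<leftarrow>Delta b. \<Phi> a c d)"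
  using transfer3[OF vsH vsM coassoc[of h] l1 l2 l3]
  by (simp add: map_concat sum_list_concat_map comp_def split_def)

lemma Delta_lin:
  assumes l1: "\<And>b. Vector_Spaces.linear sc scM (\<lambda>a. G a b)"
    and l2: "\<And>a. Vector_Spaces.linear sc scM (G a)"
  shows "Vector_Spaces.linear sc scM (\<lambda>x. \<Sum>(a,b)\<leftarrow>Delta x. G a b)"
proof -
  interpret M: vector_space scM by (rule vsM)
  have add: "(\<Sum>(a,b)\<leftarrow>Delta (x + y). G a b) = (\<Sum>(a,b)\<leftarrow>Delta x. G a b) + (\<Sum>(a,b)\<leftarrow>Delta y. G a b)" for x y
    using transfer2[OF vsH vsM Delta_add[of x y] l1 l2] by simp
  have scl: "(\<Sum>(a,b)\<leftarrow>Delta (sc c x). G a b) = scM c (\<Sum>(a,b)\<leftarrow>Delta x. G a b)" for c x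
    using transfer2[OF vsH vsM Delta_scale[of c x] l1 l2]
    by (simp add: M.scale_sum_list split_def lin_scale[OF l1] comp_def)
  show ?thesis using add scl vsH vsM by (simp add: linear_iff)
qed


lemma LS: "Vector_Spaces.linear sc sc S" by (rule S_linear)
lemma L1: "Vector_Spaces.linear sc scM (\<lambda>a. act a m)" by (rule act_linear_left)
lemma L2: "Vector_Spaces.linear scM scM (act h)" by (rule act_linear_right)
lemma Lmr: "Vector_Spaces.linear sc sc (\<lambda>x. x * c)"
  using vsH sc_mult_left by (simp add: linear_iff distrib_right)
lemma Lml: "Vector_Spaces.linear sc sc (\<lambda>x. c * x)"
  using vsH sc_mult_right by (simp add: linear_iff distrib_left)

lemma Tw_def': "Tw h m = (\<Sum>(a,b)\<leftarrow>Delta h. act a (T (act (S b) m)))"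
  by (simp add: T_twist_def)

lemma Tw_lin_h: "Vector_Spaces.linear sc scM (\<lambda>h. Tw h m)"
  unfolding T_twist_def
  by (rule Delta_lin[OF L1]) (intro lin_comp[OF LS] lin_comp[OF L1] lin_comp[OF linT] L2)

lemma Tw_lin_m: "Vector_Spaces.linear scM scM (Tw h)"
proof -
  have "Vector_Spaces.linear scM scM (\<lambda>m. \<Sum>x\<leftarrow>Delta h. (\<lambda>(a,b). act a (T (act (S b) m))) x)"
    by (rule lin_sum_list_fun[OF vsM vsM]) (auto intro!: lin_comp[OF L2] lin_comp[OF linT] L2)
  then show ?thesis unfolding T_twist_def by (simp add: split_def)
qed

lemma lemA: "T (act (S h) m) = (\<Sum>(a,b)\<leftarrow>Delta h. act (S a) (Tw b m))"
proof -
  have "(\<Sum>(a,b)\<leftarrow>Delta h. act (S a) (Tw b m))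
      = (\<Sum>(a,b)\<leftarrow>Delta h. \<Sum>(c,d)\<leftarrow>Delta b. act (S a * c) (T (act (S d) m)))"
    by (simp add: Tw_def' lin_sum_list2[OF L2] act_mult)
  also have "\<dots> = (\<Sum>(a,b)\<leftarrow>Delta h. \<Sum>(c,d)\<leftarrow>Delta a. act (S c * d) (T (act (S b) m)))"
    by (rule coassoc_tr[symmetric])
      (intro lin_comp[OF LS] lin_comp[OF Lmr] lin_comp[OF Lml] lin_comp[OF L1] lin_comp[OF linT] L1 L2)+
  also have "\<dots> = (\<Sum>(a,b)\<leftarrow>Delta h. act (\<Sum>(c,d)\<leftarrow>Delta a. S c * d) (T (act (S b) m)))"
    by (simp add: lin_sum_list2[OF L1])
  also have "\<dots> = (\<Sum>(a,b)\<leftarrow>Delta h. T (act (S (sc (eps a) b)) m))"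
    by (simp add: antipode_left lin_scale[OF L1] act_one lin_scale[OF LS] lin_scale[OF linT])
  also have "\<dots> = T (act (S (\<Sum>(a,b)\<leftarrow>Delta h. sc (eps a) b)) m)"
    by (rule lin_sum_list2[symmetric, of sc scM]) (intro lin_comp[OF LS] lin_comp[OF L1] linT)
  finally show ?thesis by (simp add: counit_left)
qed

lemma lemB: "(\<Sum>(a,b)\<leftarrow>Delta k. Tw a (act b m)) = act k (T m)"
proof -
  have "(\<Sum>(a,b)\<leftarrow>Delta k. Tw a (act b m))
      = (\<Sum>(a,b)\<leftarrow>Delta k. \<Sum>(c,d)\<leftarrow>Delta a. act c (T (act (S d * b) m)))"
    by (simp add: Tw_def' act_mult)
  also have "\<dots> = (\<Sum>(a,b)\<leftarrow>Delta k. \<Sum>(c,d)\<leftarrow>Delta b. act a (T (act (S c * d) m)))"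
    by (rule coassoc_tr)
      (intro lin_comp[OF LS] lin_comp[OF Lmr] lin_comp[OF Lml] lin_comp[OF L1] lin_comp[OF linT] L1 L2)+
  also have "\<dots> = (\<Sum>(a,b)\<leftarrow>Delta k. act a (T (act (\<Sum>(c,d)\<leftarrow>Delta b. S c * d) m)))"
    by (simp add: lin_sum_list2[OF L1] lin_sum_list2[OF linT] lin_sum_list2[OF L2])
  also have "\<dots> = (\<Sum>(a,b)\<leftarrow>Delta k. act (sc (eps b) a) (T m))"
    by (simp add: antipode_right antipode_left lin_scale[OF L1] act_one lin_scale[OF L2] lin_scale[OF linT])
  also have "\<dots> = act (\<Sum>(a,b)\<leftarrow>Delta k. sc (eps b) a) (T m)"
    by (rule lin_sum_list2[symmetric]) (rule L1)
  finally show ?thesis by (simp add: counit_right)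
qed

definition U :: "'h \<Rightarrow> 'm \<Rightarrow> 'm" where
  "U h m = (\<Sum>(a,b)\<leftarrow>Delta h. act (S a) (T (act b m)))"

lemma lemU: "T (U h m) = U h (T m)"
proof -
  have "T (U h m) = (\<Sum>(a,b)\<leftarrow>Delta h. T (act (S a) (T (act b m))))"
    by (simp add: U_def lin_sum_list2[OF linT])
  also have "\<dots> = (\<Sum>(a,b)\<leftarrow>Delta h. \<Sum>(x,y)\<leftarrow>Delta a. act (S x) (T (Tw y (act b m))))"
    by (simp add: lemA comm)
  also have "\<dots> = (\<Sum>(a,z)\<leftarrow>Delta h. \<Sum>(y,b)\<leftarrow>Delta z. act (S a) (T (Tw y (act b m))))"
    by (rule coassoc_tr)
      (intro lin_comp[OF LS] lin_comp[OF Tw_lin_h] lin_comp[OF Tw_lin_m] lin_comp[OF L1] lin_comp[OF linT] L1 L2)+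
  also have "\<dots> = (\<Sum>(a,z)\<leftarrow>Delta h. act (S a) (T (\<Sum>(y,b)\<leftarrow>Delta z. Tw y (act b m))))"
    by (simp add: lin_sum_list2[OF L2] lin_sum_list2[OF linT])
  also have "\<dots> = U h (T m)"
    by (simp add: lemB U_def)
  finally show ?thesis .
qed


lemma main_pr: "partial_rep sc Delta S scM (range T) (\<lambda>h m. T (act h m))"
proof -
  interpret M: vector_space scM by (rule vsM)
  have fix_v: "T v = v" if "v \<in> range T" for v using that idem by auto
  have sub: "M.subspace (range T)"
    unfolding M.subspace_def
    by (metis (no_types, lifting) lin_add[OF linT] lin_scale[OF linT] lin_zero[OF linT] rangeE rangeI)
  have ax1: "(\<Sum>(a,b)\<leftarrow>Delta k. T (act h (T (act a (T (act (S b) v)))))) =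
             (\<Sum>(a,b)\<leftarrow>Delta k. T (act (h * a) (T (act (S b) v))))" if v: "v \<in> range T" for h k v
  proof -
    have tw: "T (Tw k v) = Tw k v" using comm[of k v] fix_v[OF v] by simp
    have "(\<Sum>(a,b)\<leftarrow>Delta k. T (act h (T (act a (T (act (S b) v)))))) = T (act h (T (Tw k v)))"
      by (simp add: Tw_def' lin_sum_list2[OF linT] lin_sum_list2[OF L2])
    also have "\<dots> = T (act h (Tw k v))" by (simp add: tw)
    also have "\<dots> = (\<Sum>(a,b)\<leftarrow>Delta k. T (act (h * a) (T (act (S b) v))))"
      by (simp add: Tw_def' lin_sum_list2[OF linT] lin_sum_list2[OF L2] act_mult)
    finally show ?thesis .
  qed
  have ax2: "(\<Sum>(a,b)\<leftarrow>Delta h. T (act a (T (act (S b) (T (act k v)))))) =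
             (\<Sum>(a,b)\<leftarrow>Delta h. T (act a (T (act (S b * k) v))))" for h k v
  proof -
    have "(\<Sum>(a,b)\<leftarrow>Delta h. T (act a (T (act (S b) (T (act k v)))))) = T (Tw h (T (act k v)))"
      by (simp add: Tw_def' lin_sum_list2[OF linT])
    also have "\<dots> = T (Tw h (act k v))" by (simp add: comm idem)
    also have "\<dots> = (\<Sum>(a,b)\<leftarrow>Delta h. T (act a (T (act (S b * k) v))))"
      by (simp add: Tw_def' lin_sum_list2[OF linT] act_mult)
    finally show ?thesis .
  qed
  have ax3: "(\<Sum>(a,b)\<leftarrow>Delta k. T (act h (T (act (S a) (T (act b v)))))) =
             (\<Sum>(a,b)\<leftarrow>Delta k. T (act (h * S a) (T (act b v))))" if v: "v \<in> range T" for h k v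
  proof -
    have tu: "T (U k v) = U k v" using lemU[of k v] fix_v[OF v] by simp
    have "(\<Sum>(a,b)\<leftarrow>Delta k. T (act h (T (act (S a) (T (act b v)))))) = T (act h (T (U k v)))"
      by (simp add: U_def lin_sum_list2[OF linT] lin_sum_list2[OF L2])
    also have "\<dots> = T (act h (U k v))" by (simp add: tu)
    also have "\<dots> = (\<Sum>(a,b)\<leftarrow>Delta k. T (act (h * S a) (T (act b v))))"
      by (simp add: U_def lin_sum_list2[OF linT] lin_sum_list2[OF L2] act_mult)
    finally show ?thesis .
  qed
  have ax4: "(\<Sum>(a,b)\<leftarrow>Delta h. T (act (S a) (T (act b (T (act k v)))))) =
             (\<Sum>(a,b)\<leftarrow>Delta h. T (act (S a) (T (act (b * k) v))))" for h k v
  proof -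
    have "(\<Sum>(a,b)\<leftarrow>Delta h. T (act (S a) (T (act b (T (act k v)))))) = T (U h (T (act k v)))"
      by (simp add: U_def lin_sum_list2[OF linT])
    also have "\<dots> = T (U h (act k v))" by (simp add: lemU idem)
    also have "\<dots> = (\<Sum>(a,b)\<leftarrow>Delta h. T (act (S a) (T (act (b * k) v))))"
      by (simp add: U_def lin_sum_list2[OF linT] act_mult)
    finally show ?thesis .
  qed
  have c2: "\<forall>h. \<forall>v\<in>range T. T (act h v) \<in> range T" by blast
  have c3: "\<forall>h. \<forall>v\<in>range T. \<forall>w\<in>range T. T (act h (v + w)) = T (act h v) + T (act h w)"
    by (simp add: lin_add[OF linT] lin_add[OF L2])
  have c4: "\<forall>h c. \<forall>v\<in>range T. T (act h (scM c v)) = scM c (T (act h v))"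
    by (simp add: lin_scale[OF linT] lin_scale[OF L2])
  have c5: "\<forall>x y. \<forall>v\<in>range T. T (act (x + y) v) = T (act x v) + T (act y v)"
    by (simp add: lin_add[OF linT] lin_add[OF L1])
  have c6: "\<forall>x c. \<forall>v\<in>range T. T (act (sc c x) v) = scM c (T (act x v))"
    by (simp add: lin_scale[OF linT] lin_scale[OF L1])
  have c7: "\<forall>v\<in>range T. T (act 1 v) = v" using fix_v by (simp only: act_one) blast
  show ?thesis
    unfolding partial_rep_def
    apply (intro conjI)
    apply (rule sub)
    apply (rule c2)
    apply (rule c3)
    apply (rule c4)
    apply (rule c5)
    apply (rule c6)
    apply (rule c7)
    apply (intro allI ballI, erule ax1)
    apply (intro allI ballI, rule ax2)
    apply (intro allI ballI, erule ax3)
    apply (intro allI ballI, rule ax4)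
    done
qed

end

theorem mainTheorem6:
  fixes sc :: "'k::field \<Rightarrow> 'h::ring_1 \<Rightarrow> 'h"
    and Delta :: "'h \<Rightarrow> ('h \<times> 'h) list"
    and eps :: "'h \<Rightarrow> 'k"
    and S :: "'h \<Rightarrow> 'h"
    and scM :: "'k \<Rightarrow> 'm::ab_group_add \<Rightarrow> 'm"
    and act :: "'h \<Rightarrow> 'm \<Rightarrow> 'm"
    and T :: "'m \<Rightarrow> 'm"
  assumes "hopf_module sc Delta eps S scM act"
    and "Vector_Spaces.linear scM scM T"
    and "\<And>m. T (T m) = T m"
    and "\<And>h m. T_twist Delta S act T h (T m) = T (T_twist Delta S act T h m)"
  shows "partial_rep sc Delta S scM (range T) (\<lambda>h m. T (act h m))"
proof -
  interpret proj sc Delta eps S scM act T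
    using assms by (simp add: proj_def proj_axioms_def)
  show ?thesis by (rule main_pr)
qed

end
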